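(* Let $d\ge1$ and let $0<\alpha_1\le\alpha_2\le\dots\le\alpha_d<1$. Then the simplices $S_{\alpha_1},\dots,S_{\alpha_d}\subset\mathbb R^d$ have a common point.
   Context: Let $e_1,\dots,e_d$ be the standard basis of $\mathbb R^d$. For $0\le\alpha\le1$, $S_\alpha$ is the $(d-1)$-dimensional simplex (convex hull) with vertices $v_k=e_1+\dots+e_{k-1}+\alpha e_k$ for $k=1,\dots,d$. *)

theory Defs
  imports "HOL-Analysis.Analysis"
begin

text \<open>Coordinates of R^d are indexed by a finite linearly (well-)ordered type 'n,
  playing the role of {1,...,d} with d = CARD('n).  The standard basis vector e_k is
  axis k 1.\<close>

definition simplex_vertex :: "real \<Rightarrow> 'n::{finite,wellorder} \<Rightarrow> real ^ ('n::{finite,wellorder})" where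
  "simplex_vertex a k = (\<Sum>j\<in>{j. j < k}. axis j 1) + a *\<^sub>R axis k 1"

definition S_simplex :: "real \<Rightarrow> (real ^ ('n::{finite,wellorder})) set" where
  "S_simplex a = convex hull (range (simplex_vertex a :: 'n::{finite,wellorder} \<Rightarrow> real ^ ('n::{finite,wellorder})))"

end

theory Submission
  imports Defs
begin

definition rk :: "'n::{finite,wellorder} \<Rightarrow> nat" where
  "rk j = card {l. l < j}"

definition wv :: "'n::{finite,wellorder} set \<Rightarrow> real ^ ('n::{finite,wellorder})" where
  "wv A = (\<chi> j. if rk j < card A then 1 else 0)"

lemma rk_less: "(j::'n::{finite,wellorder}) < k \<Longrightarrow> rk j < rk k"
  unfolding rk_def by (rule psubset_card_mono) auto

lemma rk_inj: "rk (j::'n::{finite,wellorder}) = rk k \<Longrightarrow> j = k"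
  using rk_less[of j k] rk_less[of k j] by (metis less_irrefl linorder_neqE)

lemma rk_bound: "rk (j::'n::{finite,wellorder}) < CARD('n)"
  unfolding rk_def by (rule psubset_card_mono) auto

lemma rk_surj:
  assumes "m < CARD('n::{finite,wellorder})"
  shows "\<exists>k::'n. rk k = m"
proof -
  have inj: "inj (rk :: 'n \<Rightarrow> nat)" by (meson injI rk_inj)
  have sub: "range (rk :: 'n \<Rightarrow> nat) \<subseteq> {..<CARD('n)}" using rk_bound by auto
  have "card (range (rk :: 'n \<Rightarrow> nat)) = card {..<CARD('n)}"
    using card_image[OF inj] by simp
  then have "range (rk :: 'n \<Rightarrow> nat) = {..<CARD('n)}"
    using card_subset_eq[OF _ sub] by simp
  then show ?thesis using assms by (metis imageE lessThan_iff)
qed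

lemma vertex_eq:
  fixes B :: "'n::{finite,wellorder} set" and k :: 'n
  assumes "i \<notin> B" "rk k = card B"
  shows "a *\<^sub>R wv (insert i B) + (1 - a) *\<^sub>R wv B = simplex_vertex a k"
proof -
  have cB: "card (insert i B) = Suc (card B)" using assms(1) by simp
  have s: "(\<Sum>j\<in>{j. j < k}. axis j (1::real) $ l) = (if l < k then 1 else 0)" for l
    by (simp add: axis_def)
  show ?thesis
    unfolding vec_eq_iff
  proof
    fix l
    have "l < k \<longleftrightarrow> rk l < rk k" using rk_less rk_inj
      by (metis linorder_neqE not_less_iff_gr_or_eq)
    moreover have "l = k \<longleftrightarrow> rk l = rk k" using rk_inj by blast
    ultimately show "(a *\<^sub>R wv (insert i B) + (1 - a) *\<^sub>R wv B) $ l = simplex_vertex a k $ l"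
      unfolding simplex_vertex_def wv_def using assms(2) cB s[of l]
      by (auto simp: axis_def)
  qed
qed

theorem lemma2p2:
  fixes \<alpha> :: "'n::{finite,wellorder} \<Rightarrow> real"
  assumes "\<And>i. 0 < \<alpha> i" and "\<And>i. \<alpha> i < 1" and "mono \<alpha>"
  shows "\<exists>x :: real ^ ('n::{finite,wellorder}). \<forall>i. x \<in> S_simplex (\<alpha> i)"
proof -
  define PP where "PP A = prod \<alpha> A * prod (\<lambda>b. 1 - \<alpha> b) (UNIV - A)" for A :: "'n set"
  define x where "x = (\<Sum>A\<in>(UNIV :: 'n set set). PP A *\<^sub>R wv A)"
  show ?thesis
  proof (intro exI allI)
    fix i :: 'n
    define Oi where "Oi = UNIV - {i}"
    define Q where "Q B = prod \<alpha> B * prod (\<lambda>b. 1 - \<alpha> b) (Oi - B)" for B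
    have iO: "i \<notin> Oi" and UO: "UNIV = insert i Oi" unfolding Oi_def by auto
    have fin: "finite (Pow Oi)" by simp
    have disj: "Pow Oi \<inter> insert i ` Pow Oi = {}" using iO by auto
    have injI: "inj_on (insert i) (Pow Oi)" unfolding inj_on_def using iO by (metis PowD Set.set_insert insert_ident subsetD)
    have P1: "PP B = (1 - \<alpha> i) * Q B" if "B \<in> Pow Oi" for B
    proof -
      have "UNIV - B = insert i (Oi - B)" using that UO iO by auto
      then show ?thesis unfolding PP_def Q_def using iO by simp
    qed
    have P2: "PP (insert i B) = \<alpha> i * Q B" if "B \<in> Pow Oi" for B
    proof -
      have "UNIV - insert i B = Oi - B" using that UO iO by auto
      moreover have "i \<notin> B" using that iO by auto
      moreover have "finite B" by simp
      ultimately show ?thesis unfolding PP_def Q_def by simp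
    qed
    have "x = (\<Sum>A\<in>Pow Oi \<union> insert i ` Pow Oi. PP A *\<^sub>R wv A)"
      unfolding x_def by (metis Pow_UNIV Pow_insert UO)
    also have "\<dots> = (\<Sum>A\<in>Pow Oi. PP A *\<^sub>R wv A) + (\<Sum>A\<in>insert i ` Pow Oi. PP A *\<^sub>R wv A)"
      by (rule sum.union_disjoint) (use disj in auto)
    also have "(\<Sum>A\<in>insert i ` Pow Oi. PP A *\<^sub>R wv A) = (\<Sum>B\<in>Pow Oi. PP (insert i B) *\<^sub>R wv (insert i B))"
      by (simp add: sum.reindex[OF injI])
    finally have "x = (\<Sum>B\<in>Pow Oi. Q B *\<^sub>R (\<alpha> i *\<^sub>R wv (insert i B) + (1 - \<alpha> i) *\<^sub>R wv B))"
      using P1 P2 by (simp add: sum.distrib[symmetric] scaleR_add_right algebra_simps)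
    moreover have "(\<Sum>B\<in>Pow Oi. Q B *\<^sub>R (\<alpha> i *\<^sub>R wv (insert i B) + (1 - \<alpha> i) *\<^sub>R wv B)) \<in> S_simplex (\<alpha> i)"
      unfolding S_simplex_def
    proof (rule convex_sum[OF fin convex_convex_hull])
      have "(\<Prod>b\<in>Oi. \<alpha> b + (1 - \<alpha> b)) = (\<Sum>B\<in>Pow Oi. Q B)"
        unfolding Q_def by (rule prod_add) simp
      then show "(\<Sum>B\<in>Pow Oi. Q B) = 1" by simp
    next
      fix B assume "B \<in> Pow Oi"
      show "0 \<le> Q B" unfolding Q_def using assms(1,2)
        by (intro mult_nonneg_nonneg prod_nonneg) (auto intro: less_imp_le)
    next
      fix B assume B: "B \<in> Pow Oi"
      have "card B \<le> card Oi" using B by (auto intro: card_mono)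
      also have "card Oi < CARD('n)" unfolding Oi_def by (simp add: card_Diff_singleton)
      finally obtain k :: 'n where k: "rk k = card B" using rk_surj by blast
      have "i \<notin> B" using B iO by auto
      then have "\<alpha> i *\<^sub>R wv (insert i B) + (1 - \<alpha> i) *\<^sub>R wv B = simplex_vertex (\<alpha> i) k"
        using vertex_eq k by blast
      also have "\<dots> \<in> convex hull range (simplex_vertex (\<alpha> i))"
        by (rule hull_inc) simp
      finally show "\<alpha> i *\<^sub>R wv (insert i B) + (1 - \<alpha> i) *\<^sub>R wv B \<in> convex hull range (simplex_vertex (\<alpha> i))" .
    qed
    ultimately show "x \<in> S_simplex (\<alpha> i)" by simp
  qed
qed

end
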